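(* Let $k$ be a positive integer. Let $T_1,T_2$ be disjoint subsets of $\{0,1,\ldots,k\}$ such that no $t\in T_1$ satisfies $t-1\in T_2$. Let $$A=\left\{\left(3^{a_1}+\cdots+3^{a_m}\right)+2\left(3^{b_1}+\cdots+3^{b_n}\right)\mid \{a_1,\ldots,a_m\}\subseteq T_1,\ \{b_1,\ldots,b_n\}\subseteq T_2\right\}.$$ Then $S(A)$ is an independent Stanley sequence.
   Context: A set of non-negative integers is 3-free if no three of its elements form an arithmetic progression. For a finite 3-free set $A=\{a_0<\cdots<a_k\}$ of non-negative integers, the Stanley sequence $S(A)=(a_n)_{n\ge0}$ is the increasing sequence with initial terms $a_0,\ldots,a_k$ in which each subsequent $a_{n+1}$ is the smallest integer greater than $a_n$ such that $\{a_0,\ldots,a_{n+1}\}$ is 3-free. A Stanley sequence $(a_n)$ is independent if there is a constant $\lambda$ such that for all sufficiently large $k$: $a_{2^k+i}=a_{2^k}+a_i$ for all $0\le i<2^k$, and $a_{2^k}=2a_{2^k-1}-\lambda+1$. *)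

theory Defs
  imports Main
begin

definition three_free :: "nat set \<Rightarrow> bool" where
  "three_free X \<longleftrightarrow> \<not> (\<exists>x\<in>X. \<exists>y\<in>X. \<exists>z\<in>X. x < y \<and> y < z \<and> x + z = 2 * y)"

fun stanley_list :: "nat set \<Rightarrow> nat \<Rightarrow> nat list" where
  "stanley_list A 0 = sorted_list_of_set A"
| "stanley_list A (Suc n) =
     (let l = stanley_list A n
      in l @ [LEAST x. last l < x \<and> three_free (set l \<union> {x})])"

text \<open>The Stanley sequence S(A) = (a_n), for finite nonempty 3-free A.\<close>
definition stanley :: "nat set \<Rightarrow> nat \<Rightarrow> nat" where
  "stanley A n = stanley_list A n ! n"

definition independent :: "(nat \<Rightarrow> nat) \<Rightarrow> bool" where
  "independent a \<longleftrightarrow> (\<exists>lam::int. \<exists>K. \<forall>k\<ge>K.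
      (\<forall>i<2^k. a (2^k + i) = a (2^k) + a i) \<and>
      int (a (2^k)) = 2 * int (a (2^k - 1)) - lam + 1)"

end

theory Submission
  imports Defs
begin

definition S0 :: "nat set" where "S0 = {x. \<forall>i. x div 3^i mod 3 \<noteq> 2}"

lemma d3: "(r::nat) < 3 \<Longrightarrow> (3*q + r) div 3 = q \<and> (3*q + r) mod 3 = r"
  by auto

lemma d3s[simp]: "Suc (3*q) div 3 = q" "Suc (3*q) mod 3 = 1" "Suc (Suc (3*q)) div 3 = q"
   "Suc (Suc (3*q)) mod 3 = 2"
  using d3[of 1 q] d3[of 2 q] by simp_all

lemma neq3[simp]: "3*q \<noteq> Suc (3*p)" "3*q \<noteq> Suc (Suc (3*p))" "Suc (3*q) \<noteq> Suc (Suc (3*p))"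
  "Suc (3*p) \<noteq> 3*q" "Suc (Suc (3*p)) \<noteq> 3*q" "Suc (Suc (3*p)) \<noteq> Suc (3*q)"
  by presburger+

lemma S0_rec: "x \<in> S0 \<longleftrightarrow> x mod 3 \<noteq> 2 \<and> x div 3 \<in> S0"
proof
  assume "x \<in> S0"
  hence h: "\<forall>i. x div 3^i mod 3 \<noteq> 2" by (simp add: S0_def)
  have "x mod 3 \<noteq> 2" using h[rule_format, of 0] by simp
  moreover have "x div 3 \<in> S0" unfolding S0_def
  proof (safe)
    fix i assume "x div 3 div 3 ^ i mod 3 = 2"
    hence "x div 3^(Suc i) mod 3 = 2" by (simp add: div_mult2_eq)
    thus False using h by blast
  qed
  ultimately show "x mod 3 \<noteq> 2 \<and> x div 3 \<in> S0" by blast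
next
  assume a: "x mod 3 \<noteq> 2 \<and> x div 3 \<in> S0"
  show "x \<in> S0" unfolding S0_def
  proof (safe)
    fix i assume h: "x div 3 ^ i mod 3 = 2"
    show False
    proof (cases i)
      case 0 thus False using a h by simp
    next
      case (Suc j)
      hence "x div 3 div 3^j mod 3 = 2" using h by (simp add: div_mult2_eq)
      thus False using a by (simp add: S0_def)
    qed
  qed
qed

lemma S0_rec2: "x \<in> S0 \<longleftrightarrow> x mod 3 \<le> 1 \<and> x div 3 \<in> S0"
  using S0_rec[of x] by auto

lemma S0_0[simp]: "0 \<in> S0" by (simp add: S0_def)
lemma S0_1[simp]: "1 \<in> S0" by (subst S0_rec2) simp
lemma S0_Suc0[simp]: "Suc 0 \<in> S0" using S0_1 by simp

lemma S0_3q: "r \<le> 1 \<Longrightarrow> (3*q + r \<in> S0) = (q \<in> S0)"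
  by (subst S0_rec2) auto

lemma S0_digit: "\<exists>a b. a \<in> S0 \<and> b \<in> S0 \<and> a \<le> b \<and> b \<le> n \<and> a + n = 2*b \<and> (n \<notin> S0 \<longrightarrow> a < b \<and> b < n)"
proof (induction n rule: less_induct)
  case (less n)
  show ?case
  proof (cases "n = 0")
    case True thus ?thesis by (intro exI[of _ 0]) simp
  next
    case False
    define q where "q = n div 3"
    define r where "r = n mod 3"
    have n: "n = 3*q + r" and r3: "r < 3" by (auto simp: q_def r_def)
    have "q < n" using False by (simp add: q_def)
    then obtain a b where ab: "a \<in> S0" "b \<in> S0" "a \<le> b" "b \<le> q" "a + q = 2*b"
        "q \<notin> S0 \<longrightarrow> a < b \<and> b < q" using less by blast
    have nS: "n \<in> S0 \<longleftrightarrow> r \<le> 1 \<and> q \<in> S0" using S0_rec2[of n] by (simp add: q_def r_def)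
    consider "r = 0" | "r = 1" | "r = 2" using r3 by linarith
    thus ?thesis
    proof cases
      case 1
      show ?thesis
        apply (rule exI[of _ "3*a"], rule exI[of _ "3*b"])
        using ab nS 1 n S0_3q[of 0 a] S0_3q[of 0 b] by auto
    next
      case 2
      show ?thesis
        apply (rule exI[of _ "3*a+1"], rule exI[of _ "3*b+1"])
        using ab nS 2 n S0_3q[of 1 a] S0_3q[of 1 b] by auto
    next
      case 3
      show ?thesis
        apply (rule exI[of _ "3*a"], rule exI[of _ "3*b+1"])
        using ab nS 3 n S0_3q[of 0 a] S0_3q[of 1 b] by auto
    qed
  qed
qed

lemma S0_3free_aux: "x \<in> S0 \<Longrightarrow> y \<in> S0 \<Longrightarrow> z \<in> S0 \<Longrightarrow> x + z = 2*y \<Longrightarrow> x = y"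
proof (induction y arbitrary: x z rule: less_induct)
  case (less y)
  define qx rx qy ry qz rz where "qx = x div 3" "rx = x mod 3" "qy = y div 3" "ry = y mod 3"
     "qz = z div 3" "rz = z mod 3"
  have xm: "rx \<le> 1" "qx \<in> S0" using less.prems(1) S0_rec2[of x] unfolding qx_rx_qy_ry_qz_rz_def by blast+
  have ym: "ry \<le> 1" "qy \<in> S0" using less.prems(2) S0_rec2[of y] unfolding qx_rx_qy_ry_qz_rz_def by blast+
  have zm: "rz \<le> 1" "qz \<in> S0" using less.prems(3) S0_rec2[of z] unfolding qx_rx_qy_ry_qz_rz_def by blast+
  have x: "x = 3*qx + rx" and y: "y = 3*qy + ry" and z: "z = 3*qz + rz"
    unfolding qx_rx_qy_ry_qz_rz_def by simp_all
  have e: "3*qx + rx + 3*qz + rz = 2*(3*qy + ry)"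
    using less.prems(4) x y z by simp
  have gen: "\<And>p q r a b c::nat. a \<le> 1 \<Longrightarrow> b \<le> 1 \<Longrightarrow> c \<le> 1 \<Longrightarrow> 3*p + a + 3*q + c = 2*(3*r + b) \<Longrightarrow> a = b \<and> c = b"
    by (auto simp: le_Suc_eq) presburger+
  have md: "rx = ry \<and> rz = ry" using gen[OF xm(1) ym(1) zm(1) e] .
  hence e2: "qx + qz = 2*qy" using e by simp
  show ?case
  proof (cases "y = 0")
    case True thus ?thesis using less.prems(4) by simp
  next
    case False
    hence "qy < y" using y by linarith
    hence "qx = qy" using less.IH[OF _ xm(2) ym(2) zm(2) e2] by blast
    thus ?thesis using md x y by simp
  qed
qed

lemma three_free_S0: "three_free S0"
  unfolding three_free_def using S0_3free_aux by fastforce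

lemma S0_split: "x \<in> S0 \<longleftrightarrow> x mod 3^n \<in> S0 \<and> x div 3^n \<in> S0"
proof (induction n arbitrary: x)
  case 0 thus ?case by simp
next
  case (Suc n)
  have m: "x mod 3^Suc n = 3 * (x div 3 mod 3^n) + x mod 3"
    by (simp add: mod_mult2_eq)
  have dv: "x div 3^Suc n = x div 3 div 3^n" by (simp add: div_mult2_eq)
  have "x mod 3^Suc n \<in> S0 \<longleftrightarrow> x mod 3 \<le> 1 \<and> x div 3 mod 3^n \<in> S0"
    using S0_rec2[of "x mod 3^Suc n"] d3[of "x mod 3" "x div 3 mod 3^n"] unfolding m by simp
  thus ?case using Suc[of "x div 3"] S0_rec2[of x] dv by auto
qed

lemma S0_bound: "s \<in> S0 \<Longrightarrow> s < 3^n \<Longrightarrow> 2*s < 3^n"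
proof (induction n arbitrary: s)
  case 0 thus ?case by simp
next
  case (Suc n)
  have s: "s = 3*(s div 3) + s mod 3" by simp
  have r: "s mod 3 \<le> 1" "s div 3 \<in> S0" using Suc.prems(1) S0_rec2[of s] by blast+
  have "s div 3 < 3^n" using Suc.prems(2) by (simp add: less_mult_imp_div_less)
  hence "2*(s div 3) < 3^n" using Suc.IH r(2) by blast
  hence "2*(s div 3) + 1 \<le> 3^n" by simp
  hence "6*(s div 3) + 3 \<le> 3^Suc n" by simp
  thus ?case using r(1) s by linarith
qed

definition dig :: "nat set \<Rightarrow> nat set \<Rightarrow> nat set \<Rightarrow> nat set" where
  "dig Y0 Y1 Y2 = {x. (x mod 3 = 0 \<and> x div 3 \<in> Y0) \<or> (x mod 3 = 1 \<and> x div 3 \<in> Y1) \<or> (x mod 3 = 2 \<and> x div 3 \<in> Y2)}"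

lemma dig_0[simp]: "3*q \<in> dig Y0 Y1 Y2 \<longleftrightarrow> q \<in> Y0" by (simp add: dig_def)
lemma dig_1[simp]: "Suc (3*q) \<in> dig Y0 Y1 Y2 \<longleftrightarrow> q \<in> Y1" by (simp add: dig_def)
lemma dig_2[simp]: "Suc (Suc (3*q)) \<in> dig Y0 Y1 Y2 \<longleftrightarrow> q \<in> Y2" by (simp add: dig_def)

lemma dig_cases: fixes x :: nat obtains q where "x = 3*q" | q where "x = 3*q+1" | q where "x = 3*q+2"
proof -
  have "x = 3*(x div 3) + x mod 3" by simp
  moreover have "x mod 3 = 0 \<or> x mod 3 = 1 \<or> x mod 3 = 2" by linarith
  ultimately show ?thesis using that by (metis add_0_right)
qed

lemma S0_dig: "S0 = dig S0 S0 {}"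
proof (rule set_eqI)
  fix x show "x \<in> S0 \<longleftrightarrow> x \<in> dig S0 S0 {}"
    by (cases x rule: dig_cases) (simp_all, (subst S0_rec2, simp)+)
qed

lemma card_dig: "card (dig Y0 Y1 Y2 \<inter> {..<3*N}) = card (Y0 \<inter> {..<N}) + card (Y1 \<inter> {..<N}) + card (Y2 \<inter> {..<N})"
proof -
  have eq: "dig Y0 Y1 Y2 \<inter> {..<3*N} = ((\<lambda>y. 3*y) ` (Y0 \<inter> {..<N}) \<union> (\<lambda>y. 3*y+1) ` (Y1 \<inter> {..<N})) \<union> (\<lambda>y. 3*y+2) ` (Y2 \<inter> {..<N})"
  proof (rule set_eqI)
    fix x show "x \<in> dig Y0 Y1 Y2 \<inter> {..<3*N} \<longleftrightarrow> x \<in> ((\<lambda>y. 3*y) ` (Y0 \<inter> {..<N}) \<union> (\<lambda>y. 3*y+1) ` (Y1 \<inter> {..<N})) \<union> (\<lambda>y. 3*y+2) ` (Y2 \<inter> {..<N})"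
      by (cases x rule: dig_cases) auto
  qed
  have i0: "inj_on (\<lambda>y::nat. 3*y) A" for A by (auto simp: inj_on_def)
  have i1: "inj_on (\<lambda>y::nat. 3*y+1) A" for A by (auto simp: inj_on_def)
  have i2: "inj_on (\<lambda>y::nat. 3*y+2) A" for A by (auto simp: inj_on_def)
  have d1: "(\<lambda>y. 3*y) ` (Y0 \<inter> {..<N}) \<inter> (\<lambda>y. 3*y+1) ` (Y1 \<inter> {..<N}) = {}" by auto
  have d2: "((\<lambda>y. 3*y) ` (Y0 \<inter> {..<N}) \<union> (\<lambda>y. 3*y+1) ` (Y1 \<inter> {..<N})) \<inter> (\<lambda>y. 3*y+2) ` (Y2 \<inter> {..<N}) = {}" by auto
  show ?thesis unfolding eq
    by (subst card_Un_disjoint[OF _ _ d2], simp, simp, subst card_Un_disjoint[OF _ _ d1], simp, simp,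
        simp add: card_image inj_on_def)
qed

lemma card_S0: "card (S0 \<inter> {..<3^n}) = 2^n"
proof (induction n)
  case 0
  have "S0 \<inter> {..<1} = {0}" by auto
  thus ?case by simp
next
  case (Suc n)
  have "card (S0 \<inter> {..<3^Suc n}) = card (dig S0 S0 {} \<inter> {..<3*3^n})" using S0_dig by simp
  also have "\<dots> = 2^Suc n" unfolding card_dig using Suc by simp
  finally show ?case .
qed

definition per :: "nat set \<Rightarrow> nat \<Rightarrow> bool" where
  "per X n \<longleftrightarrow> (\<forall>x. x \<in> X \<longleftrightarrow> x mod 3^n \<in> X \<and> x div 3^n \<in> S0)"

lemma modSuc: "(x::nat) mod 3^Suc n mod 3 = x mod 3" "x mod 3^Suc n div 3 = x div 3 mod 3^n"
  "x div 3^Suc n = x div 3 div 3^n"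
proof -
  have m: "x mod 3^Suc n = 3 * (x div 3 mod 3^n) + x mod 3" by (simp add: mod_mult2_eq)
  show "x mod 3^Suc n mod 3 = x mod 3" unfolding m by simp
  show "x mod 3^Suc n div 3 = x div 3 mod 3^n" unfolding m by simp
  show "x div 3^Suc n = x div 3 div 3^n" by (simp add: div_mult2_eq)
qed

lemma per_dig: "per Y0 n \<Longrightarrow> per Y1 n \<Longrightarrow> per Y2 n \<Longrightarrow> per (dig Y0 Y1 Y2) (Suc n)"
proof -
  assume p0: "per Y0 n" and p1: "per Y1 n" and p2: "per Y2 n"
  show ?thesis unfolding per_def
  proof
    fix x
    have a0: "x div 3 \<in> Y0 \<longleftrightarrow> x div 3 mod 3^n \<in> Y0 \<and> x div 3 div 3^n \<in> S0"
      using p0 unfolding per_def by blast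
    have a1: "x div 3 \<in> Y1 \<longleftrightarrow> x div 3 mod 3^n \<in> Y1 \<and> x div 3 div 3^n \<in> S0"
      using p1 unfolding per_def by blast
    have a2: "x div 3 \<in> Y2 \<longleftrightarrow> x div 3 mod 3^n \<in> Y2 \<and> x div 3 div 3^n \<in> S0"
      using p2 unfolding per_def by blast
    show "x \<in> dig Y0 Y1 Y2 \<longleftrightarrow> x mod 3^Suc n \<in> dig Y0 Y1 Y2 \<and> x div 3^Suc n \<in> S0"
      unfolding dig_def mem_Collect_eq modSuc using a0 a1 a2 by blast
  qed
qed

lemma per_empty: "per {} n" by (simp add: per_def)

lemma per_S0: "per S0 n" unfolding per_def using S0_split by blast

lemma modhi: "(x::nat) mod 3^Suc n mod 3^n = x mod 3^n" "x mod 3^Suc n div 3^n = x div 3^n mod 3"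
  "x div 3^Suc n = x div 3^n div 3"
proof -
  have m: "x mod 3^Suc n = 3^n * (x div 3^n mod 3) + x mod 3^n"
    by (simp only: power_Suc2 mod_mult2_eq)
  show "x mod 3^Suc n mod 3^n = x mod 3^n" unfolding m by simp
  show "x mod 3^Suc n div 3^n = x div 3^n mod 3" unfolding m by simp
  show "x div 3^Suc n = x div 3^n div 3" by (simp only: power_Suc2 div_mult2_eq)
qed

lemma S0_lt3: "(v::nat) < 3 \<Longrightarrow> v \<in> S0 \<longleftrightarrow> v \<le> 1"
  by (subst S0_rec2) simp

lemma per_Suc: "per X n \<Longrightarrow> per X (Suc n)"
proof -
  assume p: "per X n"
  have pp: "\<And>x. x \<in> X \<longleftrightarrow> x mod 3^n \<in> X \<and> x div 3^n \<in> S0" using p unfolding per_def by blast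
  show "per X (Suc n)" unfolding per_def
  proof
    fix x
    note a = pp[of x]
    have b: "x mod 3^Suc n \<in> X \<longleftrightarrow> x mod 3^n \<in> X \<and> x div 3^n mod 3 \<in> S0"
      using pp[of "x mod 3^Suc n"] unfolding modhi .
    have c: "x div 3^n \<in> S0 \<longleftrightarrow> x div 3^n mod 3 \<in> S0 \<and> x div 3^n div 3 \<in> S0"
      using S0_split[of "x div 3^n" 1] by simp
    show "x \<in> X \<longleftrightarrow> x mod 3^Suc n \<in> X \<and> x div 3^Suc n \<in> S0"
      unfolding modhi(3) using a b c by blast
  qed
qed

lemma per_mono: assumes "per X n" "n \<le> j" shows "per X j"
  using assms(2) by (induction j rule: dec_induct) (auto intro: per_Suc assms(1))

lemma per_shift: "per X n \<Longrightarrow> (v::nat) < 3^n \<Longrightarrow> 3^n + v \<in> X \<longleftrightarrow> v \<in> X"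
proof -
  assume p: "per X n" and v: "v < 3^n"
  have pp: "\<And>x. x \<in> X \<longleftrightarrow> x mod 3^n \<in> X \<and> x div 3^n \<in> S0" using p unfolding per_def by blast
  have "(3^n + v) mod 3^n = v" using v by simp
  moreover have "(3^n + v) div 3^n = 1" using v by (intro div_nat_eqI) auto
  ultimately show ?thesis using pp[of "3^n+v"] by simp
qed

lemma card_Suc: "per X n \<Longrightarrow> card (X \<inter> {..<3^Suc n}) = 2 * card (X \<inter> {..<3^n})"
proof -
  assume p: "per X n"
  have pp: "\<And>x. x \<in> X \<longleftrightarrow> x mod 3^n \<in> X \<and> x div 3^n \<in> S0" using p unfolding per_def by blast
  have eq: "X \<inter> {..<3^Suc n} = (X \<inter> {..<3^n}) \<union> (\<lambda>v. 3^n + v) ` (X \<inter> {..<3^n})"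
  proof (rule set_eqI, rule iffI)
    fix x assume x: "x \<in> X \<inter> {..<3^Suc n}"
    show "x \<in> (X \<inter> {..<3^n}) \<union> (\<lambda>v. 3^n + v) ` (X \<inter> {..<3^n})"
    proof (cases "x < 3^n")
      case True thus ?thesis using x by auto
    next
      case False
      show ?thesis
      proof (cases "x < 2*3^n")
        case True
        have "x - 3^n < 3^n" using True by simp
        moreover have "x = 3^n + (x - 3^n)" using False by simp
        ultimately have "x - 3^n \<in> X" using per_shift[OF p, of "x - 3^n"] x by auto
        thus ?thesis using False True \<open>x - 3^n < 3^n\<close> by (auto intro!: image_eqI[of _ _ "x - 3^n"])
      next
        case F2: False
        have "x div 3^n = 2" using F2 x by (intro div_nat_eqI) auto
        hence "x \<notin> X" using pp[of x] S0_lt3[of 2] by simp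
        thus ?thesis using x by simp
      qed
    qed
  next
    fix x assume "x \<in> (X \<inter> {..<3^n}) \<union> (\<lambda>v. 3^n + v) ` (X \<inter> {..<3^n})"
    thus "x \<in> X \<inter> {..<3^Suc n}"
      using per_shift[OF p] by auto
  qed
  have d: "(X \<inter> {..<3^n}) \<inter> (\<lambda>v. 3^n + v) ` (X \<inter> {..<3^n}) = {}" by auto
  have "card (X \<inter> {..<3^Suc n}) = card (X \<inter> {..<3^n}) + card ((\<lambda>v. 3^n + v) ` (X \<inter> {..<3^n}))"
    unfolding eq by (rule card_Un_disjoint[OF _ _ d]) auto
  also have "\<dots> = 2 * card (X \<inter> {..<3^n})" by (simp add: card_image)
  finally show ?thesis .
qed

definition covering :: "nat \<Rightarrow> nat set \<Rightarrow> bool" where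
  "covering m X \<longleftrightarrow> (\<forall>z. m < z \<longrightarrow> z \<notin> X \<longrightarrow> (\<exists>a b. a \<in> X \<and> b \<in> X \<and> a < b \<and> b < z \<and> a + z = 2*b))"

lemma three_free_subset: "three_free X \<Longrightarrow> Y \<subseteq> X \<Longrightarrow> three_free Y"
  unfolding three_free_def by blast

lemma last_max: "sorted_wrt (<) l \<Longrightarrow> (y::nat) \<in> set l \<Longrightarrow> y \<le> last l"
proof (induction l)
  case Nil thus ?case by simp
next
  case (Cons x xs)
  show ?case
  proof (cases "xs = []")
    case True thus ?thesis using Cons by simp
  next
    case False
    hence "last xs \<in> set xs" by simp
    hence xl: "x < last xs" using Cons.prems(1) by simp
    have ll: "last (x # xs) = last xs" using False by simp
    show ?thesis
    proof (cases "y = x")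
      case True thus ?thesis using xl ll by simp
    next
      case F2: False
      hence "y \<in> set xs" using Cons.prems(2) by simp
      thus ?thesis using Cons.IH Cons.prems(1) ll by simp
    qed
  qed
qed

lemma covering_infinite: assumes "covering m X" shows "infinite X"
proof
  assume f: "finite X"
  define M where "M = Max (insert 0 X)"
  have fM: "\<And>x. x \<in> X \<Longrightarrow> x \<le> M" unfolding M_def using f by simp
  define z where "z = 2 * M + m + 1"
  have zX: "z \<notin> X"
  proof
    assume "z \<in> X" hence "z \<le> M" using fM by blast
    thus False unfolding z_def by simp
  qed
  have "m < z" unfolding z_def by simp
  then obtain a b where ab: "a \<in> X" "b \<in> X" "a + z = 2*b" using assms zX unfolding covering_def by blast
  have "b \<le> M" using fM ab(2) by blast
  thus False using ab(3) unfolding z_def by simp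
qed

definition good_list :: "nat set \<Rightarrow> nat list \<Rightarrow> bool" where
  "good_list X l \<longleftrightarrow> sorted_wrt (<) l \<and> l \<noteq> [] \<and> set l \<subseteq> X \<and> (\<forall>x\<in>X. x \<le> last l \<longrightarrow> x \<in> set l)"

lemma stanley_list_good:
  assumes fin: "finite A" and ne: "A \<noteq> {}" and AX: "A \<subseteq> X" and init: "\<forall>x\<in>X. x \<le> Max A \<longrightarrow> x \<in> A"
    and tf: "three_free X" and cov: "covering (Max A) X"
  shows "good_list X (stanley_list A n) \<and> length (stanley_list A n) = card A + n \<and> Max A \<le> last (stanley_list A n)"
proof (induction n)
  case 0
  let ?l = "sorted_list_of_set A"
  have s: "set ?l = A" using fin by simp
  have sw: "sorted_wrt (<) ?l" by (simp add: strict_sorted_list_of_set)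
  have ne': "?l \<noteq> []" using s ne by auto
  have lM: "last ?l = Max A"
  proof (rule antisym)
    show "last ?l \<le> Max A" using fin s ne' last_in_set[OF ne'] by simp
    show "Max A \<le> last ?l" using last_max[OF sw] s fin ne by simp
  qed
  have l0: "stanley_list A 0 = ?l" by simp
  have "good_list X ?l" unfolding good_list_def
  proof (intro conjI)
    show "sorted_wrt (<) ?l" by (rule sw)
    show "?l \<noteq> []" by (rule ne')
    show "set ?l \<subseteq> X" unfolding s by (rule AX)
    show "\<forall>x\<in>X. x \<le> last ?l \<longrightarrow> x \<in> set ?l" unfolding s lM by (rule init)
  qed
  moreover have "length ?l = card A" by simp
  ultimately show ?case unfolding l0 lM by simp
next
  case (Suc n)
  define l where "l = stanley_list A n"
  have g: "good_list X l" and len: "length l = card A + n" and MaxL: "Max A \<le> last l"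
    using Suc unfolding l_def by auto
  have sw: "sorted_wrt (<) l" and lne: "l \<noteq> []" and lX: "set l \<subseteq> X"
    and lin: "\<forall>x\<in>X. x \<le> last l \<longrightarrow> x \<in> set l" using g unfolding good_list_def by auto
  have inf: "infinite X" using covering_infinite[OF cov] .
  obtain x0 where x0: "x0 \<in> X" "last l < x0"
    using inf unfolding finite_nat_set_iff_bounded_le by (meson not_le)
  define e where "e = (LEAST x. x \<in> X \<and> last l < x)"
  have eX: "e \<in> X \<and> last l < e" unfolding e_def by (rule LeastI[of _ x0]) (use x0 in auto)
  have emin: "\<And>y. y \<in> X \<Longrightarrow> last l < y \<Longrightarrow> e \<le> y" unfolding e_def by (rule Least_le) auto
  have least: "(LEAST x. last l < x \<and> three_free (set l \<union> {x})) = e"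
  proof (rule Least_equality)
    show "last l < e \<and> three_free (set l \<union> {e})"
      using eX lX by (auto intro: three_free_subset[OF tf])
  next
    fix y assume y: "last l < y \<and> three_free (set l \<union> {y})"
    show "e \<le> y"
    proof (rule ccontr)
      assume "\<not> e \<le> y"
      hence ye: "y < e" by simp
      have yX: "y \<notin> X" using emin y ye by fastforce
      have "Max A < y" using MaxL y by simp
      then obtain a b where ab: "a \<in> X" "b \<in> X" "a < b" "b < y" "a + y = 2*b"
        using cov yX unfolding covering_def by blast
      have bl: "b \<le> last l" using emin[OF ab(2)] ab(4) ye by fastforce
      hence "b \<in> set l" using lin ab(2) by blast
      moreover have "a \<in> set l" using lin ab(1) ab(3) bl by auto
      ultimately have "\<not> three_free (set l \<union> {y})" unfolding three_free_def
        using ab by (intro notI) (metis Un_iff insertI1)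
      thus False using y by blast
    qed
  qed
  have step: "stanley_list A (Suc n) = l @ [e]" using least unfolding l_def by (simp add: Let_def)
  have "good_list X (l @ [e])" unfolding good_list_def
  proof (intro conjI)
    show "sorted_wrt (<) (l @ [e])" using sw eX last_max[OF sw] by (auto simp: sorted_wrt_append intro: le_less_trans)
    show "l @ [e] \<noteq> []" by simp
    show "set (l @ [e]) \<subseteq> X" using lX eX by auto
    show "\<forall>x\<in>X. x \<le> last (l @ [e]) \<longrightarrow> x \<in> set (l @ [e])"
    proof (intro ballI impI)
      fix x assume x: "x \<in> X" "x \<le> last (l @ [e])"
      show "x \<in> set (l @ [e])"
      proof (cases "x \<le> last l")
        case True thus ?thesis using lin x by auto
      next
        case False
        hence "e \<le> x" using emin x(1) by simp
        thus ?thesis using x by simp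
      qed
    qed
  qed
  thus ?case using step len MaxL eX by simp
qed

lemma stanley_count:
  assumes fin: "finite A" and ne: "A \<noteq> {}" and AX: "A \<subseteq> X" and init: "\<forall>x\<in>X. x \<le> Max A \<longrightarrow> x \<in> A"
    and tf: "three_free X" and cov: "covering (Max A) X"
  shows "stanley A i \<in> X \<and> card (X \<inter> {..<stanley A i}) = i"
proof -
  define l where "l = stanley_list A i"
  have g: "good_list X l" and len: "length l = card A + i"
    using stanley_list_good[OF assms, of i] unfolding l_def by auto
  have sw: "sorted_wrt (<) l" and lX: "set l \<subseteq> X"
    and lin: "\<forall>x\<in>X. x \<le> last l \<longrightarrow> x \<in> set l" using g unfolding good_list_def by auto
  have cA: "card A \<ge> 1" using fin ne by (simp add: Suc_leI card_gt_0_iff)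
  have il: "i < length l" using len cA by simp
  have sa: "stanley A i = l ! i" unfolding stanley_def l_def ..
  have inX: "l ! i \<in> X" using lX il nth_mem by blast
  have eq: "X \<inter> {..<l ! i} = set (take i l)"
  proof (rule set_eqI, rule iffI)
    fix x assume x: "x \<in> X \<inter> {..<l ! i}"
    have "l ! i \<le> last l" using last_max[OF sw] il nth_mem by blast
    hence "x \<in> set l" using lin x by auto
    then obtain j where j: "j < length l" "l ! j = x" by (auto simp: in_set_conv_nth)
    have "j < i"
    proof (rule ccontr)
      assume "\<not> j < i"
      hence "i \<le> j" by simp
      hence "l ! i \<le> l ! j" using sorted_wrt_nth_less[OF sw, of i j] j(1) by (cases "i = j") auto
      thus False using x j(2) by simp
    qed
    thus "x \<in> set (take i l)" using j by (auto simp: in_set_conv_nth intro!: exI[of _ j])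
  next
    fix x assume "x \<in> set (take i l)"
    then obtain j where j: "j < i" "l ! j = x" using il by (auto simp: in_set_conv_nth)
    have "l ! j < l ! i" using sorted_wrt_nth_less[OF sw j(1) il] .
    moreover have "l ! j \<in> X" using lX j il by (meson nth_mem order.strict_trans subsetD)
    ultimately show "x \<in> X \<inter> {..<l ! i}" using j by auto
  qed
  have "distinct l" using sw strict_sorted_iff by blast
  hence "card (set (take i l)) = i" using il by (simp add: distinct_card)
  thus ?thesis using sa inX eq by simp
qed

lemma indep_from:
  assumes cnt: "\<And>i. f i \<in> X \<and> card (X \<inter> {..<f i}) = i"
    and p: "per X n" and c: "card (X \<inter> {..<3^n}) = 2^n" and z: "0 \<in> X"
  shows "independent f"
proof -
  let ?c = "\<lambda>v. card (X \<inter> {..<v})"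
  have cmono: "\<And>v w. v \<le> w \<Longrightarrow> ?c v \<le> ?c w" by (rule card_mono) auto
  have uniq: "\<And>v w. v \<in> X \<Longrightarrow> w \<in> X \<Longrightarrow> ?c v = ?c w \<Longrightarrow> v = w"
  proof -
    have aux: "\<And>v w. v \<in> X \<Longrightarrow> v < w \<Longrightarrow> ?c v < ?c w"
    proof -
      fix v w assume v: "v \<in> X" "v < w"
      have "insert v (X \<inter> {..<v}) \<subseteq> X \<inter> {..<w}" using v by auto
      hence "card (insert v (X \<inter> {..<v})) \<le> ?c w" by (rule card_mono[rotated]) auto
      thus "?c v < ?c w" by simp
    qed
    fix v w assume "v \<in> X" "w \<in> X" "?c v = ?c w"
    thus "v = w" using aux[of v w] aux[of w v] by (cases v w rule: linorder_cases) auto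
  qed
  have cj: "\<And>j. n \<le> j \<Longrightarrow> per X j \<and> ?c (3^j) = 2^j"
  proof -
    fix j assume "n \<le> j"
    thus "per X j \<and> ?c (3^j) = 2^j"
    proof (induction j rule: dec_induct)
      case base thus ?case using p c by simp
    next
      case (step j)
      thus ?case using per_Suc card_Suc by simp
    qed
  qed
  have tr: "\<And>j (v::nat). n \<le> j \<Longrightarrow> v \<le> 3^j \<Longrightarrow> ?c (3^j + v) = 2^j + ?c v"
  proof -
    fix j and v :: nat assume j: "n \<le> j" and v: "v \<le> 3^j"
    have pj: "per X j" and cj': "?c (3^j) = 2^j" using cj[OF j] by auto
    have eq: "X \<inter> {..<3^j + v} = (X \<inter> {..<3^j}) \<union> (\<lambda>u. 3^j + u) ` (X \<inter> {..<v})"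
    proof (rule set_eqI, rule iffI)
      fix x assume x: "x \<in> X \<inter> {..<3^j + v}"
      show "x \<in> (X \<inter> {..<3^j}) \<union> (\<lambda>u. 3^j + u) ` (X \<inter> {..<v})"
      proof (cases "x < 3^j")
        case True thus ?thesis using x by auto
      next
        case False
        hence xe: "x = 3^j + (x - 3^j)" by simp
        have xv: "x - 3^j < v" using x False by (simp add: less_diff_conv2 add.commute)
        hence "x - 3^j < 3^j" using v by simp
        hence "x - 3^j \<in> X" using per_shift[OF pj, of "x - 3^j"] x xe by auto
        moreover note xv
        ultimately show ?thesis using xe by (auto intro!: image_eqI[of _ _ "x - 3^j"])
      qed
    next
      fix x assume "x \<in> (X \<inter> {..<3^j}) \<union> (\<lambda>u. 3^j + u) ` (X \<inter> {..<v})"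
      thus "x \<in> X \<inter> {..<3^j + v}" using per_shift[OF pj] v by auto
    qed
    have d: "(X \<inter> {..<3^j}) \<inter> (\<lambda>u. 3^j + u) ` (X \<inter> {..<v}) = {}" by auto
    have "?c (3^j + v) = ?c (3^j) + card ((\<lambda>u. 3^j + u) ` (X \<inter> {..<v}))"
      unfolding eq by (rule card_Un_disjoint[OF _ _ d]) auto
    also have "\<dots> = 2^j + ?c v" using cj' by (simp add: card_image)
    finally show "?c (3^j + v) = 2^j + ?c v" .
  qed
  have fs: "\<And>j i. n \<le> j \<Longrightarrow> i < 2^j \<Longrightarrow> f (2^j + i) = 3^j + f i"
  proof -
    fix j i :: nat assume j: "n \<le> j" and i: "i < 2^j"
    have pj: "per X j" and cj': "?c (3^j) = 2^j" using cj[OF j] by auto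
    have fi: "f i \<in> X" "?c (f i) = i" using cnt by auto
    have lt: "f i < 3^j"
    proof (rule ccontr)
      assume "\<not> f i < 3^j"
      hence "?c (3^j) \<le> ?c (f i)" using cmono by simp
      thus False using fi cj' i by simp
    qed
    have m: "3^j + f i \<in> X" using per_shift[OF pj lt] fi by simp
    have "?c (3^j + f i) = 2^j + i" using tr[OF j] lt fi by simp
    thus "f (2^j + i) = 3^j + f i" using uniq[OF _ m] cnt[of "2^j + i"] by metis
  qed
  have f0: "f 0 = 0" using uniq[OF _ z] cnt[of 0] by simp
  define lam where "lam = 2 * int (f (2^n - 1)) + 1 - 3^n"
  have key: "\<And>k. n \<le> k \<Longrightarrow> 2 * int (f (2^k - 1)) + 1 - 3^k = lam"
  proof -
    fix k assume "n \<le> k"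
    thus "2 * int (f (2^k - 1)) + 1 - 3^k = lam"
    proof (induction k rule: dec_induct)
      case base thus ?case unfolding lam_def by simp
    next
      case (step k)
      have e: "(2::nat)^Suc k - 1 = 2^k + (2^k - 1)" by simp
      have "f (2^Suc k - 1) = 3^k + f (2^k - 1)" unfolding e by (rule fs[OF step(1)]) simp
      thus ?case using step(3) by simp
    qed
  qed
  show ?thesis unfolding independent_def
  proof (rule exI[of _ lam], rule exI[of _ n], intro allI impI)
    fix k assume k: "n \<le> k"
    have fk: "f (2^k) = 3^k" using fs[OF k, of 0] f0 by simp
    show "(\<forall>i<2 ^ k. f (2 ^ k + i) = f (2 ^ k) + f i) \<and> int (f (2 ^ k)) = 2 * int (f (2 ^ k - 1)) - lam + 1"
      using fs[OF k] fk key[OF k] by simp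
  qed
qed

definition P1 :: "nat \<Rightarrow> nat set \<Rightarrow> bool" where
  "P1 m X \<longleftrightarrow> (\<forall>n. \<exists>s. s \<in> S0 \<and> s \<le> n \<and> n \<le> m + 2*s \<and> m + 2*s - n \<in> X)"

definition shS :: "nat \<Rightarrow> nat set" where "shS m = {y. m \<le> y \<and> y - m \<in> S0}"

definition Inv :: "nat set \<Rightarrow> nat set \<Rightarrow> bool \<Rightarrow> bool" where
  "Inv A X q \<longleftrightarrow> finite A \<and> 0 \<in> A \<and> A \<subseteq> X \<and> (\<forall>x\<in>X. x \<le> Max A \<longrightarrow> x \<in> A) \<and> three_free X
     \<and> covering (Max A) X \<and> P1 (Max A) X \<and> (q \<longrightarrow> Max A + 1 \<in> X)
     \<and> (\<exists>n. per X n \<and> card (X \<inter> {..<3^n}) = 2^n)"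

lemma dig_image: "dig Y0 Y1 Y2 = (\<lambda>y. 3*y) ` Y0 \<union> (\<lambda>y. Suc (3*y)) ` Y1 \<union> (\<lambda>y. Suc (Suc (3*y))) ` Y2"
proof (rule set_eqI)
  fix x show "x \<in> dig Y0 Y1 Y2 \<longleftrightarrow> x \<in> (\<lambda>y. 3*y) ` Y0 \<union> (\<lambda>y. Suc (3*y)) ` Y1 \<union> (\<lambda>y. Suc (Suc (3*y))) ` Y2"
    by (cases x rule: dig_cases) auto
qed

lemma finite_dig: "finite Y0 \<Longrightarrow> finite Y1 \<Longrightarrow> finite Y2 \<Longrightarrow> finite (dig Y0 Y1 Y2)"
  unfolding dig_image by simp

lemma dig_mono: "Y0 \<subseteq> Z0 \<Longrightarrow> Y1 \<subseteq> Z1 \<Longrightarrow> Y2 \<subseteq> Z2 \<Longrightarrow> dig Y0 Y1 Y2 \<subseteq> dig Z0 Z1 Z2"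
  unfolding dig_def by auto

lemma decomp3: "(x::nat) = 3*(x div 3) + x mod 3" by simp

lemma three_free_dig01: assumes t0: "three_free Y0" and t1: "three_free Y1" shows "three_free (dig Y0 Y1 {})"
  unfolding three_free_def
proof (intro notI, elim bexE conjE)
  fix x y z assume xm: "x \<in> dig Y0 Y1 {}" and ym: "y \<in> dig Y0 Y1 {}" and zm: "z \<in> dig Y0 Y1 {}"
    and xy: "x < y" and yz: "y < z" and e: "x + z = 2*y"
  define qx rx qy ry qz rz where "qx = x div 3" "rx = x mod 3" "qy = y div 3" "ry = y mod 3"
     "qz = z div 3" "rz = z mod 3"
  note defs = qx_rx_qy_ry_qz_rz_def
  have x: "x = 3*qx + rx" and y: "y = 3*qy + ry" and z: "z = 3*qz + rz" unfolding defs by simp_all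
  have rx: "rx \<le> 1" "rx = 0 \<longrightarrow> qx \<in> Y0" "rx = 1 \<longrightarrow> qx \<in> Y1" using xm unfolding dig_def defs by auto
  have ry: "ry \<le> 1" "ry = 0 \<longrightarrow> qy \<in> Y0" "ry = 1 \<longrightarrow> qy \<in> Y1" using ym unfolding dig_def defs by auto
  have rz: "rz \<le> 1" "rz = 0 \<longrightarrow> qz \<in> Y0" "rz = 1 \<longrightarrow> qz \<in> Y1" using zm unfolding dig_def defs by auto
  have e': "3*qx + rx + 3*qz + rz = 2*(3*qy + ry)" using e x y z by simp
  have gen: "\<And>p q r a b c::nat. a \<le> 1 \<Longrightarrow> b \<le> 1 \<Longrightarrow> c \<le> 1 \<Longrightarrow> 3*p + a + 3*q + c = 2*(3*r + b) \<Longrightarrow> a = b \<and> c = b"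
    by (auto simp: le_Suc_eq) presburger+
  have md: "rx = ry \<and> rz = ry" using gen[OF rx(1) ry(1) rz(1) e'] .
  have e2: "qx + qz = 2*qy" using e' md by simp
  have o1: "qx < qy" using xy x y md by simp
  have o2: "qy < qz" using yz y z md by simp
  show False
  proof (cases "ry = 0")
    case True
    hence "qx \<in> Y0" "qy \<in> Y0" "qz \<in> Y0" using rx ry rz md by auto
    thus False using t0 o1 o2 e2 unfolding three_free_def by blast
  next
    case False
    hence "ry = 1" using ry(1) by simp
    hence "qx \<in> Y1" "qy \<in> Y1" "qz \<in> Y1" using rx ry rz md by auto
    thus False using t1 o1 o2 e2 unfolding three_free_def by blast
  qed
qed

lemma three_free_dig02: assumes t0: "three_free Y0" and t2: "three_free Y2" shows "three_free (dig Y0 {} Y2)"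
  unfolding three_free_def
proof (intro notI, elim bexE conjE)
  fix x y z assume xm: "x \<in> dig Y0 {} Y2" and ym: "y \<in> dig Y0 {} Y2" and zm: "z \<in> dig Y0 {} Y2"
    and xy: "x < y" and yz: "y < z" and e: "x + z = 2*y"
  define qx rx qy ry qz rz where "qx = x div 3" "rx = x mod 3" "qy = y div 3" "ry = y mod 3"
     "qz = z div 3" "rz = z mod 3"
  note defs = qx_rx_qy_ry_qz_rz_def
  have x: "x = 3*qx + rx" and y: "y = 3*qy + ry" and z: "z = 3*qz + rz" unfolding defs by simp_all
  have rx: "rx = 0 \<or> rx = 2" "rx = 0 \<longrightarrow> qx \<in> Y0" "rx = 2 \<longrightarrow> qx \<in> Y2" using xm unfolding dig_def defs by auto
  have ry: "ry = 0 \<or> ry = 2" "ry = 0 \<longrightarrow> qy \<in> Y0" "ry = 2 \<longrightarrow> qy \<in> Y2" using ym unfolding dig_def defs by auto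
  have rz: "rz = 0 \<or> rz = 2" "rz = 0 \<longrightarrow> qz \<in> Y0" "rz = 2 \<longrightarrow> qz \<in> Y2" using zm unfolding dig_def defs by auto
  have e': "3*qx + rx + 3*qz + rz = 2*(3*qy + ry)" using e x y z by simp
  have gen: "\<And>p q r a b c::nat. a = 0 \<or> a = 2 \<Longrightarrow> b = 0 \<or> b = 2 \<Longrightarrow> c = 0 \<or> c = 2 \<Longrightarrow> 3*p + a + 3*q + c = 2*(3*r + b) \<Longrightarrow> a = b \<and> c = b"
    by auto presburger+
  have md: "rx = ry \<and> rz = ry" using gen[OF rx(1) ry(1) rz(1) e'] .
  have e2: "qx + qz = 2*qy" using e' md by simp
  have o1: "qx < qy" using xy x y md by simp
  have o2: "qy < qz" using yz y z md by simp
  show False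
  proof (cases "ry = 0")
    case True
    hence "qx \<in> Y0" "qy \<in> Y0" "qz \<in> Y0" using rx ry rz md by auto
    thus False using t0 o1 o2 e2 unfolding three_free_def by blast
  next
    case False
    hence "ry = 2" using ry(1) by simp
    hence "qx \<in> Y2" "qy \<in> Y2" "qz \<in> Y2" using rx ry rz md by auto
    thus False using t2 o1 o2 e2 unfolding three_free_def by blast
  qed
qed

lemma three_free_shS: "three_free (shS m)"
  unfolding three_free_def shS_def
proof (intro notI, elim bexE conjE)
  fix x y z assume "x \<in> {y. m \<le> y \<and> y - m \<in> S0}" "y \<in> {y. m \<le> y \<and> y - m \<in> S0}" "z \<in> {y. m \<le> y \<and> y - m \<in> S0}"
    and o: "x < y" "y < z" "x + z = 2*y"
  hence "x - m \<in> S0" "y - m \<in> S0" "z - m \<in> S0" "(x - m) + (z - m) = 2*(y - m)" by auto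
  hence "x - m = y - m" by (rule S0_3free_aux)
  thus False using o \<open>x \<in> _\<close> \<open>y \<in> _\<close> by auto
qed

lemma per_card_mono: assumes "per X n" "card (X \<inter> {..<3^n}) = 2^n" "n \<le> j" shows "per X j \<and> card (X \<inter> {..<3^j}) = 2^j"
  using assms(3)
proof (induction j rule: dec_induct)
  case base thus ?case using assms by simp
next
  case (step j) thus ?case using per_Suc card_Suc by simp
qed

lemma mod_div_small: "(a::nat) < c \<Longrightarrow> (a + c*b) mod c = a \<and> (a + c*b) div c = b"
  by simp

lemma per_shS: assumes m: "2*m \<le> 3^n" shows "per (shS m) n"
  unfolding per_def
proof
  fix y
  show "y \<in> shS m \<longleftrightarrow> y mod 3^n \<in> shS m \<and> y div 3^n \<in> S0"
  proof
    assume "y \<in> shS m"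
    hence y: "m \<le> y" "y - m \<in> S0" unfolding shS_def by auto
    define s where "s = y - m"
    have sS: "s mod 3^n \<in> S0" "s div 3^n \<in> S0" using y(2) S0_split[of s n] unfolding s_def by auto
    have "2*(s mod 3^n) < 3^n" using S0_bound[OF sS(1)] by simp
    hence lt: "m + s mod 3^n < 3^n" using m by simp
    have ye: "y = (m + s mod 3^n) + 3^n * (s div 3^n)" using y(1) unfolding s_def by simp
    have "y mod 3^n = m + s mod 3^n" "y div 3^n = s div 3^n"
      using mod_div_small[OF lt, of "s div 3^n"] ye by simp_all
    thus "y mod 3^n \<in> shS m \<and> y div 3^n \<in> S0" using sS unfolding shS_def by simp
  next
    assume a: "y mod 3^n \<in> shS m \<and> y div 3^n \<in> S0"
    define t where "t = y mod 3^n - m"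
    have t: "m \<le> y mod 3^n" "t \<in> S0" using a unfolding shS_def t_def by auto
    have yd: "y = y mod 3^n + 3^n * (y div 3^n)" by simp
    have ye: "y - m = t + 3^n * (y div 3^n)" "m \<le> y"
      using yd t(1) unfolding t_def by simp_all (metis le_trans mod_less_eq_dividend)
    have "y mod 3^n < 3^n" by simp
    hence tl: "t < 3^n" unfolding t_def by linarith
    have "(y - m) mod 3^n = t" "(y - m) div 3^n = y div 3^n"
      using mod_div_small[OF tl, of "y div 3^n"] ye(1) by simp_all
    hence "y - m \<in> S0" using S0_split[of "y - m" n] t(2) a by simp
    thus "y \<in> shS m" using ye(2) unfolding shS_def by simp
  qed
qed

lemma card_shS: assumes m: "2*m \<le> 3^n" shows "card (shS m \<inter> {..<3^n}) = 2^n"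
proof -
  have "shS m \<inter> {..<3^n} = (\<lambda>s. m + s) ` (S0 \<inter> {..<3^n})"
  proof (rule set_eqI, rule iffI)
    fix y assume "y \<in> shS m \<inter> {..<3^n}"
    hence y: "m \<le> y" "y - m \<in> S0" "y < 3^n" unfolding shS_def by auto
    thus "y \<in> (\<lambda>s. m + s) ` (S0 \<inter> {..<3^n})" by (auto intro!: image_eqI[of _ _ "y - m"])
  next
    fix y assume "y \<in> (\<lambda>s. m + s) ` (S0 \<inter> {..<3^n})"
    then obtain s where s: "s \<in> S0" "s < 3^n" "y = m + s" by auto
    have "2*s < 3^n" using S0_bound[OF s(1,2)] .
    thus "y \<in> shS m \<inter> {..<3^n}" using s m unfolding shS_def by auto
  qed
  thus ?thesis using card_S0[of n] by (simp add: card_image)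
qed

lemma S0_3s[simp]: "3*s \<in> S0 \<longleftrightarrow> s \<in> S0" "Suc (3*s) \<in> S0 \<longleftrightarrow> s \<in> S0" "Suc (Suc (3*s)) \<notin> S0"
  by (subst S0_rec2, simp)+

lemma Inv_basic: assumes "Inv A X q"
  shows "finite A" "0 \<in> A" "A \<subseteq> X" "\<forall>x\<in>X. x \<le> Max A \<longrightarrow> x \<in> A" "three_free X"
    "covering (Max A) X" "P1 (Max A) X" "q \<longrightarrow> Max A + 1 \<in> X" "\<exists>n. per X n \<and> card (X \<inter> {..<3^n}) = 2^n"
    "Max A \<in> X" "A \<noteq> {}"
proof -
  show f: "finite A" and z: "0 \<in> A" and s: "A \<subseteq> X" and "\<forall>x\<in>X. x \<le> Max A \<longrightarrow> x \<in> A" and "three_free X"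
    "covering (Max A) X" "P1 (Max A) X" "q \<longrightarrow> Max A + 1 \<in> X" "\<exists>n. per X n \<and> card (X \<inter> {..<3^n}) = 2^n"
    using assms unfolding Inv_def by auto
  show ne: "A \<noteq> {}" using z by auto
  show "Max A \<in> X" using Max_in[OF f ne] s by auto
qed

lemma Max_dig1: "finite A \<Longrightarrow> A \<noteq> {} \<Longrightarrow> Max (dig A A {}) = Suc (3*Max A)"
proof (rule Max_eqI)
  assume f: "finite A" and ne: "A \<noteq> {}"
  show "finite (dig A A {})" using f by (simp add: finite_dig)
  show "Suc (3*Max A) \<in> dig A A {}" using Max_in[OF f ne] by simp
  fix y assume "y \<in> dig A A {}"
  thus "y \<le> Suc (3*Max A)" using f by (cases y rule: dig_cases) (auto dest!: Max_ge[OF f])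
qed

lemma Max_dig2: "finite A \<Longrightarrow> A \<noteq> {} \<Longrightarrow> Max (dig A {} A) = Suc (Suc (3*Max A))"
proof (rule Max_eqI)
  assume f: "finite A" and ne: "A \<noteq> {}"
  show "finite (dig A {} A)" using f by (simp add: finite_dig)
  show "Suc (Suc (3*Max A)) \<in> dig A {} A" using Max_in[OF f ne] by simp
  fix y assume "y \<in> dig A {} A"
  thus "y \<le> Suc (Suc (3*Max A))" using f by (cases y rule: dig_cases) (auto dest!: Max_ge[OF f])
qed

lemma Max_dig0: "finite A \<Longrightarrow> A \<noteq> {} \<Longrightarrow> Max (dig A {} {}) = 3*Max A"
proof (rule Max_eqI)
  assume f: "finite A" and ne: "A \<noteq> {}"
  show "finite (dig A {} {})" using f by (simp add: finite_dig)
  show "3*Max A \<in> dig A {} {}" using Max_in[OF f ne] by simp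
  fix y assume "y \<in> dig A {} {}"
  thus "y \<le> 3*Max A" using f by (cases y rule: dig_cases) (auto dest!: Max_ge[OF f])
qed

lemma zero_dig: "0 \<in> Y0 \<Longrightarrow> 0 \<in> dig Y0 Y1 Y2" unfolding dig_def by simp

lemma step_T1: assumes I: "Inv A X q" shows "Inv (dig A A {}) (dig X X {}) False"
proof -
  note B = Inv_basic[OF I]
  define m where "m = Max A"
  have cov: "covering m X" and p1: "P1 m X" and mX: "m \<in> X" using B unfolding m_def by auto
  have M: "Max (dig A A {}) = Suc (3*m)" unfolding m_def using Max_dig1 B by simp
  have init': "\<forall>x\<in>dig X X {}. x \<le> Suc (3*m) \<longrightarrow> x \<in> dig A A {}"
  proof (intro ballI impI)
    fix x assume "x \<in> dig X X {}" "x \<le> Suc (3*m)"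
    thus "x \<in> dig A A {}" using B(4) unfolding m_def by (cases x rule: dig_cases) auto
  qed
  have cov': "covering (Suc (3*m)) (dig X X {})" unfolding covering_def
  proof (intro allI impI)
    fix z assume z1: "Suc (3*m) < z" and z2: "z \<notin> dig X X {}"
    show "\<exists>a b. a \<in> dig X X {} \<and> b \<in> dig X X {} \<and> a < b \<and> b < z \<and> a + z = 2*b"
    proof (cases z rule: dig_cases)
      case (1 w)
      hence "w \<notin> X" "m < w" using z1 z2 by auto
      then obtain a b where ab: "a \<in> X" "b \<in> X" "a < b" "b < w" "a + w = 2*b"
        using cov unfolding covering_def by blast
      show ?thesis using ab 1 by (intro exI[of _ "3*a"] exI[of _ "3*b"]) auto
    next
      case (2 w)
      hence "w \<notin> X" "m < w" using z1 z2 by auto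
      then obtain a b where ab: "a \<in> X" "b \<in> X" "a < b" "b < w" "a + w = 2*b"
        using cov unfolding covering_def by blast
      show ?thesis using ab 2 by (intro exI[of _ "Suc (3*a)"] exI[of _ "Suc (3*b)"]) auto
    next
      case (3 w)
      have mw: "m \<le> w" using z1 3 by simp
      show ?thesis
      proof (cases "w \<in> X")
        case True
        show ?thesis using True 3 by (intro exI[of _ "3*w"] exI[of _ "Suc (3*w)"]) auto
      next
        case False
        hence "m < w" using mw mX by (cases "m = w") auto
        then obtain a b where ab: "a \<in> X" "b \<in> X" "a < b" "b < w" "a + w = 2*b"
          using cov False unfolding covering_def by blast
        show ?thesis using ab 3 by (intro exI[of _ "3*a"] exI[of _ "Suc (3*b)"]) auto
      qed
    qed
  qed
  have p1': "P1 (Suc (3*m)) (dig X X {})" unfolding P1_def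
  proof
    fix n'
    show "\<exists>s. s \<in> S0 \<and> s \<le> n' \<and> n' \<le> Suc (3*m) + 2*s \<and> Suc (3*m) + 2*s - n' \<in> dig X X {}"
    proof (cases n' rule: dig_cases)
      case (1 n)
      obtain s where s: "s \<in> S0" "s \<le> n" "n \<le> m + 2*s" "m + 2*s - n \<in> X" using p1 unfolding P1_def by blast
      have e: "Suc (3*m) + 2*(3*s) - n' = Suc (3*(m + 2*s - n))" using 1 s(3) by simp
      show ?thesis using s 1 by (intro exI[of _ "3*s"], unfold e) auto
    next
      case (2 n)
      obtain s where s: "s \<in> S0" "s \<le> n" "n \<le> m + 2*s" "m + 2*s - n \<in> X" using p1 unfolding P1_def by blast
      have e: "Suc (3*m) + 2*(3*s) - n' = 3*(m + 2*s - n)" using 2 s(3) by simp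
      show ?thesis using s 2 by (intro exI[of _ "3*s"], unfold e) auto
    next
      case (3 n)
      obtain s where s: "s \<in> S0" "s \<le> n" "n \<le> m + 2*s" "m + 2*s - n \<in> X" using p1 unfolding P1_def by blast
      have e: "Suc (3*m) + 2*(Suc (3*s)) - n' = Suc (3*(m + 2*s - n))" using 3 s(3) by simp
      show ?thesis using s 3 by (intro exI[of _ "Suc (3*s)"], unfold e) auto
    qed
  qed
  obtain n where pn: "per X n" "card (X \<inter> {..<3^n}) = 2^n" using B by blast
  have per': "per (dig X X {}) (Suc n)" using per_dig[OF pn(1) pn(1) per_empty] .
  have card': "card (dig X X {} \<inter> {..<3^Suc n}) = 2^Suc n"
    using card_dig[of X X "{}" "3^n"] pn(2) by simp
  show ?thesis unfolding Inv_def M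
    using B(1,2,3,5) cov' p1' per' card' init' three_free_dig01[OF B(5) B(5)]
    by (auto simp: finite_dig zero_dig intro: dig_mono[THEN subsetD])
qed

lemma step_T2: assumes I: "Inv A X True" shows "Inv (dig A {} A) (dig X {} X) True"
proof -
  note B = Inv_basic[OF I]
  define m where "m = Max A"
  have cov: "covering m X" and p1: "P1 m X" and mX: "m \<in> X" and Q: "Suc m \<in> X" using B unfolding m_def by auto
  have M: "Max (dig A {} A) = Suc (Suc (3*m))" unfolding m_def using Max_dig2 B by simp
  have init': "\<forall>x\<in>dig X {} X. x \<le> Suc (Suc (3*m)) \<longrightarrow> x \<in> dig A {} A"
  proof (intro ballI impI)
    fix x assume "x \<in> dig X {} X" "x \<le> Suc (Suc (3*m))"
    thus "x \<in> dig A {} A" using B(4) unfolding m_def by (cases x rule: dig_cases) auto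
  qed
  have cov': "covering (Suc (Suc (3*m))) (dig X {} X)" unfolding covering_def
  proof (intro allI impI)
    fix z assume z1: "Suc (Suc (3*m)) < z" and z2: "z \<notin> dig X {} X"
    show "\<exists>a b. a \<in> dig X {} X \<and> b \<in> dig X {} X \<and> a < b \<and> b < z \<and> a + z = 2*b"
    proof (cases z rule: dig_cases)
      case (1 w)
      hence "w \<notin> X" "m < w" using z1 z2 by auto
      then obtain a b where ab: "a \<in> X" "b \<in> X" "a < b" "b < w" "a + w = 2*b"
        using cov unfolding covering_def by blast
      show ?thesis using ab 1 by (intro exI[of _ "3*a"] exI[of _ "3*b"]) auto
    next
      case (3 w)
      hence "w \<notin> X" "m < w" using z1 z2 by auto
      then obtain a b where ab: "a \<in> X" "b \<in> X" "a < b" "b < w" "a + w = 2*b"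
        using cov unfolding covering_def by blast
      show ?thesis using ab 3 by (intro exI[of _ "Suc (Suc (3*a))"] exI[of _ "Suc (Suc (3*b))"]) auto
    next
      case (2 w)
      have mw: "m < w" using z1 2 by simp
      define u where "u = w - 1"
      have wu: "w = Suc u" "m \<le> u" using mw unfolding u_def by auto
      show ?thesis
      proof (cases "u \<in> X")
        case True
        show ?thesis using True 2 wu by (intro exI[of _ "3*u"] exI[of _ "Suc (Suc (3*u))"]) auto
      next
        case False
        hence "m < u" using wu mX by (cases "m = u") auto
        then obtain a b where ab: "a \<in> X" "b \<in> X" "a < b" "b < u" "a + u = 2*b"
          using cov False unfolding covering_def by blast
        show ?thesis using ab 2 wu by (intro exI[of _ "3*a"] exI[of _ "Suc (Suc (3*b))"]) auto
      qed
    qed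
  qed
  have p1': "P1 (Suc (Suc (3*m))) (dig X {} X)" unfolding P1_def
  proof
    fix n'
    show "\<exists>s. s \<in> S0 \<and> s \<le> n' \<and> n' \<le> Suc (Suc (3*m)) + 2*s \<and> Suc (Suc (3*m)) + 2*s - n' \<in> dig X {} X"
    proof (cases n' rule: dig_cases)
      case (1 n)
      obtain s where s: "s \<in> S0" "s \<le> n" "n \<le> m + 2*s" "m + 2*s - n \<in> X" using p1 unfolding P1_def by blast
      have e: "Suc (Suc (3*m)) + 2*(3*s) - n' = Suc (Suc (3*(m + 2*s - n)))" using 1 s(3) by simp
      show ?thesis using s 1 by (intro exI[of _ "3*s"], unfold e) auto
    next
      case (3 n)
      obtain s where s: "s \<in> S0" "s \<le> n" "n \<le> m + 2*s" "m + 2*s - n \<in> X" using p1 unfolding P1_def by blast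
      have e: "Suc (Suc (3*m)) + 2*(3*s) - n' = 3*(m + 2*s - n)" using 3 s(3) by simp
      show ?thesis using s 3 by (intro exI[of _ "3*s"], unfold e) auto
    next
      case (2 n)
      show ?thesis
      proof (cases "n = 0")
        case True
        have e: "Suc (Suc (3*m)) + 2*1 - n' = 3*(Suc m)" using 2 True by simp
        have q3: "3 + 3*m \<in> dig X {} X" using Q unfolding dig_def by simp
        show ?thesis using q3 2 True by (intro exI[of _ 1], unfold e) auto
      next
        case False
        obtain s where s: "s \<in> S0" "s \<le> n - 1" "n - 1 \<le> m + 2*s" "m + 2*s - (n - 1) \<in> X"
          using p1 unfolding P1_def by blast
        have e: "Suc (Suc (3*m)) + 2*(Suc (3*s)) - n' = 3*(m + 2*s - (n - 1))" using 2 s(3) False by simp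
        show ?thesis using s 2 False by (intro exI[of _ "Suc (3*s)"], unfold e) auto
      qed
    qed
  qed
  obtain n where pn: "per X n" "card (X \<inter> {..<3^n}) = 2^n" using B by blast
  have per': "per (dig X {} X) (Suc n)" using per_dig[OF pn(1) per_empty pn(1)] .
  have card': "card (dig X {} X \<inter> {..<3^Suc n}) = 2^Suc n"
    using card_dig[of X "{}" X "3^n"] pn(2) by simp
  have e3: "Suc (Suc (Suc (3*m))) = 3*(Suc m)" by simp
  have Q': "Suc (Suc (Suc (3*m))) \<in> dig X {} X" by (subst e3, subst dig_0, rule Q)
  show ?thesis unfolding Inv_def M
    using B(1,2,3,5) cov' p1' per' card' init' three_free_dig02[OF B(5) B(5)] Q'
    by (auto simp: finite_dig zero_dig intro: dig_mono[THEN subsetD])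
qed

lemma le_3pow: "(j::nat) \<le> 3^j"
proof (induction j)
  case 0 thus ?case by simp
next
  case (Suc j)
  define t where "t = (3::nat)^j"
  have t1: "1 \<le> t" "j \<le> t" unfolding t_def using Suc by simp_all
  have "(3::nat)^Suc j = 3*t" unfolding t_def by simp
  thus ?case using t1 by simp
qed

lemma step_E: assumes I: "Inv A X q" shows "Inv (dig A {} {}) (dig X (shS (Max A)) {}) True"
proof -
  note B = Inv_basic[OF I]
  define m where "m = Max A"
  have cov: "covering m X" and p1: "P1 m X" and mX: "m \<in> X" using B unfolding m_def by auto
  have M: "Max (dig A {} {}) = 3*m" unfolding m_def using Max_dig0 B by simp
  have shm: "\<And>t. t \<in> S0 \<Longrightarrow> m + t \<in> shS m" unfolding shS_def by simp
  have init': "\<forall>x\<in>dig X (shS m) {}. x \<le> 3*m \<longrightarrow> x \<in> dig A {} {}"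
  proof (intro ballI impI)
    fix x assume "x \<in> dig X (shS m) {}" "x \<le> 3*m"
    thus "x \<in> dig A {} {}" using B(4) unfolding m_def shS_def by (cases x rule: dig_cases) auto
  qed
  have cov': "covering (3*m) (dig X (shS m) {})" unfolding covering_def
  proof (intro allI impI)
    fix z assume z1: "3*m < z" and z2: "z \<notin> dig X (shS m) {}"
    show "\<exists>a b. a \<in> dig X (shS m) {} \<and> b \<in> dig X (shS m) {} \<and> a < b \<and> b < z \<and> a + z = 2*b"
    proof (cases z rule: dig_cases)
      case (1 w)
      hence "w \<notin> X" "m < w" using z1 z2 by auto
      then obtain a b where ab: "a \<in> X" "b \<in> X" "a < b" "b < w" "a + w = 2*b"
        using cov unfolding covering_def by blast
      show ?thesis using ab 1 by (intro exI[of _ "3*a"] exI[of _ "3*b"]) auto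
    next
      case (2 w)
      have mw: "m \<le> w" using z1 2 by simp
      hence nS: "w - m \<notin> S0" using z2 2 unfolding shS_def by auto
      obtain a b where ab: "a \<in> S0" "b \<in> S0" "a < b" "b < w - m" "a + (w - m) = 2*b"
        using S0_digit[of "w - m"] nS by blast
      have aw: "a + w = m + 2*b" using ab(5) mw by simp
      have bw: "m + b < w" using ab(4) by simp
      have m1: "Suc (3*(m+a)) \<in> dig X (shS m) {}" using shm[OF ab(1)] by (simp only: dig_1)
      have m2: "Suc (3*(m+b)) \<in> dig X (shS m) {}" using shm[OF ab(2)] by (simp only: dig_1)
      have o1: "Suc (3*(m+a)) < Suc (3*(m+b))" using ab(3) by simp
      have o2: "Suc (3*(m+b)) < z" using bw 2 by simp
      have o3: "Suc (3*(m+a)) + z = 2*Suc (3*(m+b))" using aw 2 by simp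
      show ?thesis using m1 m2 o1 o2 o3 by blast
    next
      case (3 w)
      have mw: "m \<le> w" using z1 3 by simp
      obtain s where s: "s \<in> S0" "s \<le> w - m" "w - m \<le> m + 2*s" "m + 2*s - (w - m) \<in> X"
        using p1 unfolding P1_def by blast
      define n where "n = w - m"
      define k where "k = m + 2*s - (w - m)"
      have wn: "w = m + n" using mw unfolding n_def by simp
      have kn: "k + n = m + 2*s" using s(3) unfolding k_def n_def by simp
      have sn: "s \<le> n" using s(2) unfolding n_def .
      have m1: "3*k \<in> dig X (shS m) {}" using s(4) unfolding k_def by (simp only: dig_0)
      have m2: "Suc (3*(m+s)) \<in> dig X (shS m) {}" using shm[OF s(1)] by (simp only: dig_1)
      have o1: "3*k < Suc (3*(m+s))" using kn sn by presburger
      have o2: "Suc (3*(m+s)) < z" using 3 wn sn by simp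
      have o3: "3*k + z = 2*Suc (3*(m+s))" using 3 wn kn by presburger
      show ?thesis using m1 m2 o1 o2 o3 by blast
    qed
  qed
  have p1': "P1 (3*m) (dig X (shS m) {})" unfolding P1_def
  proof
    fix n'
    show "\<exists>s. s \<in> S0 \<and> s \<le> n' \<and> n' \<le> 3*m + 2*s \<and> 3*m + 2*s - n' \<in> dig X (shS m) {}"
    proof (cases n' rule: dig_cases)
      case (1 n)
      obtain s where s: "s \<in> S0" "s \<le> n" "n \<le> m + 2*s" "m + 2*s - n \<in> X" using p1 unfolding P1_def by blast
      have e: "3*m + 2*(3*s) - n' = 3*(m + 2*s - n)" using 1 s(3) by simp
      show ?thesis using s 1 by (intro exI[of _ "3*s"], unfold e) auto
    next
      case (3 n)
      obtain s where s: "s \<in> S0" "s \<le> n" "n \<le> m + 2*s" "m + 2*s - n \<in> X" using p1 unfolding P1_def by blast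
      have e: "3*m + 2*(Suc (3*s)) - n' = 3*(m + 2*s - n)" using 3 s(3) by simp
      show ?thesis using s 3 by (intro exI[of _ "Suc (3*s)"], unfold e) auto
    next
      case (2 n)
      obtain a b where ab: "a \<in> S0" "b \<in> S0" "a \<le> b" "b \<le> n" "a + n = 2*b"
        using S0_digit[of n] by blast
      have e: "3*m + 2*(Suc (3*b)) - n' = Suc (3*(m + a))" using 2 ab by simp
      have m1: "Suc (3*(m+a)) \<in> dig X (shS m) {}" using shm[OF ab(1)] by (simp only: dig_1)
      show ?thesis using ab 2 m1 by (intro exI[of _ "Suc (3*b)"], unfold e) auto
    qed
  qed
  obtain n0 where pn0: "per X n0" "card (X \<inter> {..<3^n0}) = 2^n0" using B by blast
  define n where "n = n0 + 2*m"
  have "2*m \<le> 3^(2*m)" by (rule le_3pow)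
  also have "\<dots> \<le> 3^n" unfolding n_def by (rule power_increasing) auto
  finally have mn: "2*m \<le> 3^n" .
  have pn: "per X n" "card (X \<inter> {..<3^n}) = 2^n" using per_card_mono[OF pn0, of n] unfolding n_def by auto
  have per': "per (dig X (shS m) {}) (Suc n)" using per_dig[OF pn(1) per_shS[OF mn] per_empty] .
  have card': "card (dig X (shS m) {} \<inter> {..<3^Suc n}) = 2^Suc n"
    using card_dig[of X "shS m" "{}" "3^n"] pn(2) card_shS[OF mn] by simp
  have Q': "Suc (3*m) \<in> dig X (shS m) {}" using shm[of 0] by simp
  have sub: "dig A {} {} \<subseteq> dig X (shS m) {}" using B(3) by (intro dig_mono) auto
  have "Inv (dig A {} {}) (dig X (shS m) {}) True" unfolding Inv_def M
    using B(1,2) sub cov' p1' per' card' init' three_free_dig01[OF B(5) three_free_shS] Q'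
    by (auto simp: finite_dig zero_dig)
  thus ?thesis unfolding m_def .
qed

definition Dg :: "nat \<Rightarrow> nat \<Rightarrow> nat" where "Dg x t = x div 3^t mod 3"

lemma Dg_0: "Dg x 0 = x mod 3" by (simp add: Dg_def)
lemma Dg_Suc: "Dg x (Suc t) = Dg (x div 3) t" by (simp add: Dg_def div_mult2_eq)

lemma all_Dg: "(\<forall>t. P t (Dg x t)) \<longleftrightarrow> P 0 (x mod 3) \<and> (\<forall>t. P (Suc t) (Dg (x div 3) t))"
  by (metis Dg_0 Dg_Suc not0_implies_Suc)

lemma Dg_mod: "(\<forall>t. Dg x t = Dg y t) \<Longrightarrow> x mod 3^n = y mod 3^n"
proof (induction n arbitrary: x y)
  case 0 thus ?case by simp
next
  case (Suc n)
  have "\<forall>t. Dg (x div 3) t = Dg (y div 3) t" using Suc.prems Dg_Suc by metis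
  hence a: "x div 3 mod 3^n = y div 3 mod 3^n" using Suc.IH by blast
  have b: "x mod 3 = y mod 3" using Suc.prems[rule_format, of 0] by (simp add: Dg_0)
  have "x mod 3^Suc n = 3 * (x div 3 mod 3^n) + x mod 3" "y mod 3^Suc n = 3 * (y div 3 mod 3^n) + y mod 3"
    by (simp_all add: mod_mult2_eq)
  thus ?case using a b by simp
qed

lemma lt_3pow: "(j::nat) < 3^j"
proof (induction j)
  case 0 thus ?case by simp
next
  case (Suc j)
  define t where "t = (3::nat)^j"
  have t1: "j < t" unfolding t_def using Suc by simp
  have "(3::nat)^Suc j = 3*t" unfolding t_def by simp
  thus ?case using t1 by simp
qed

lemma lt_3pow2: "(x::nat) < 3^(x+y)"
proof -
  have "(3::nat)^x \<le> 3^(x+y)" by (rule power_increasing) auto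
  thus ?thesis using lt_3pow[of x] by (rule_tac less_le_trans) auto
qed

lemma Dg_eq: "(\<forall>t. Dg x t = Dg y t) \<Longrightarrow> x = y"
proof -
  assume h: "\<forall>t. Dg x t = Dg y t"
  have x: "x < 3^(x+y)" by (rule lt_3pow2)
  have y: "y < 3^(x+y)" using lt_3pow2[of y x] by (simp add: add.commute)
  show "x = y" using Dg_mod[OF h, of "x+y"] x y by simp
qed

lemma sum_shift3: fixes c :: "nat \<Rightarrow> nat" shows "finite S \<Longrightarrow> (\<Sum>u\<in>S. c u * 3^u) = (if 0 \<in> S then c 0 else 0) + 3 * (\<Sum>u\<in>{u. Suc u \<in> S}. c (Suc u) * 3^u)"
proof -
  assume f: "finite S"
  have fs: "finite {u. Suc u \<in> S}" using f by (simp add: finite_vimageI[of S Suc, unfolded vimage_def])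
  have img: "S - {0} = Suc ` {u. Suc u \<in> S}"
  proof (rule set_eqI, rule iffI)
    fix x assume x: "x \<in> S - {0}"
    hence "x = Suc (x - 1)" by simp
    thus "x \<in> Suc ` {u. Suc u \<in> S}" using x by (intro image_eqI[of _ _ "x - 1"]) auto
  qed auto
  have "(\<Sum>u\<in>S. c u * 3^u) = (\<Sum>u\<in>S \<inter> {0}. c u * 3^u) + (\<Sum>u\<in>S - {0}. c u * 3^u)"
    using f by (rule sum.Int_Diff)
  also have "(\<Sum>u\<in>S \<inter> {0}. c u * 3^u) = (if 0 \<in> S then c 0 else 0)" by auto
  also have "(\<Sum>u\<in>S - {0}. c u * 3^u) = (\<Sum>u\<in>{u. Suc u \<in> S}. c (Suc u) * 3^Suc u)"
    unfolding img by (subst sum.reindex) (auto simp: inj_on_def)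
  also have "\<dots> = 3 * (\<Sum>u\<in>{u. Suc u \<in> S}. c (Suc u) * 3^u)" by (simp add: sum_distrib_left mult.left_commute)
  finally show ?thesis .
qed

lemma Dg_sum: fixes c :: "nat \<Rightarrow> nat" shows "finite S \<Longrightarrow> (\<forall>u. c u \<le> 2) \<Longrightarrow> Dg (\<Sum>u\<in>S. c u * 3^u) t = (if t \<in> S then c t else 0)"
proof (induction t arbitrary: S c)
  case 0
  have e: "(\<Sum>u\<in>S. c u * 3^u) = (if 0 \<in> S then c 0 else 0) + 3 * (\<Sum>u\<in>{u. Suc u \<in> S}. c (Suc u) * 3^u)"
    using sum_shift3[OF 0(1)] .
  have "c 0 \<le> 2" using 0(2) by blast
  hence "(if 0 \<in> S then c 0 else 0) < 3" by simp
  thus ?case unfolding Dg_0 e by simp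
next
  case (Suc t)
  have e: "(\<Sum>u\<in>S. c u * 3^u) = (if 0 \<in> S then c 0 else 0) + 3 * (\<Sum>u\<in>{u. Suc u \<in> S}. c (Suc u) * 3^u)"
    using sum_shift3[OF Suc(2)] .
  have "c 0 \<le> 2" using Suc(3) by blast
  hence lt: "(if 0 \<in> S then c 0 else 0) < 3" by simp
  have d: "(\<Sum>u\<in>S. c u * 3^u) div 3 = (\<Sum>u\<in>{u. Suc u \<in> S}. c (Suc u) * 3^u)"
    unfolding e using lt by simp
  have fs: "finite {u. Suc u \<in> S}" using Suc(2) by (simp add: finite_vimageI[of S Suc, unfolded vimage_def])
  show ?case unfolding Dg_Suc d using Suc.IH[OF fs, of "\<lambda>u. c (Suc u)"] Suc(3) by simp
qed

definition V :: "nat set \<Rightarrow> nat set \<Rightarrow> nat" where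
  "V S1 S2 = (\<Sum>a\<in>S1. 3^a) + 2 * (\<Sum>b\<in>S2. 3^b)"

lemma Dg_V: assumes "finite S1" "finite S2" "S1 \<inter> S2 = {}"
  shows "Dg (V S1 S2) t = (if t \<in> S1 then 1 else if t \<in> S2 then 2 else 0)"
proof -
  define c where "c u = (if u \<in> S1 then 1 else 2::nat)" for u
  have "V S1 S2 = (\<Sum>u\<in>S1. c u * 3^u) + (\<Sum>u\<in>S2. c u * 3^u)"
    unfolding V_def c_def using assms(3) by (auto simp: sum_distrib_left intro!: sum.cong)
  also have "\<dots> = (\<Sum>u\<in>S1 \<union> S2. c u * 3^u)" using assms by (simp add: sum.union_disjoint)
  finally have e: "V S1 S2 = (\<Sum>u\<in>S1 \<union> S2. c u * 3^u)" .
  show ?thesis unfolding e using Dg_sum[of "S1 \<union> S2" c t] assms unfolding c_def by auto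
qed

fun st :: "nat \<Rightarrow> nat set \<Rightarrow> nat set \<Rightarrow> nat \<Rightarrow> nat set \<times> nat set" where
  "st k T1 T2 0 = ({0}, S0)"
| "st k T1 T2 (Suc j) = (let A = fst (st k T1 T2 j); X = snd (st k T1 T2 j) in
      if k - j \<in> T1 then (dig A A {}, dig X X {})
      else if k - j \<in> T2 then (dig A {} A, dig X {} X)
      else (dig A {} {}, dig X (shS (Max A)) {}))"

lemma Inv_base: "Inv {0} S0 True"
  unfolding Inv_def
proof (intro conjI)
  show "covering (Max {0}) S0" unfolding covering_def using S0_digit by fastforce
  show "P1 (Max {0}) S0" unfolding P1_def
  proof
    fix n
    obtain a b where ab: "a \<in> S0" "b \<in> S0" "a \<le> b" "b \<le> n" "a + n = 2*b" using S0_digit[of n] by blast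
    show "\<exists>s. s \<in> S0 \<and> s \<le> n \<and> n \<le> Max {0} + 2 * s \<and> Max {0} + 2 * s - n \<in> S0"
    proof (intro exI[of _ b] conjI)
      have "2*b - n = a" using ab(5) by simp
      thus "Max {0} + 2 * b - n \<in> S0" using ab(1) by simp
    qed (use ab in auto)
  qed
  show "\<exists>n. per S0 n \<and> card (S0 \<inter> {..<3 ^ n}) = 2 ^ n" using per_S0 card_S0 by blast
qed (auto simp: three_free_S0)

lemma Inv_st:
  assumes T1: "T1 \<subseteq> {0..k}" and T2: "T2 \<subseteq> {0..k}" and adj: "\<forall>t\<in>T1. t \<ge> 1 \<longrightarrow> t - 1 \<notin> T2"
  shows "j \<le> Suc k \<Longrightarrow> Inv (fst (st k T1 T2 j)) (snd (st k T1 T2 j)) (j = 0 \<or> Suc k - j \<notin> T1)"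
proof (induction j)
  case 0 thus ?case using Inv_base by simp
next
  case (Suc j)
  hence jk: "j \<le> k" by simp
  define A where "A = fst (st k T1 T2 j)"
  define X where "X = snd (st k T1 T2 j)"
  have I: "Inv A X (j = 0 \<or> Suc k - j \<notin> T1)" using Suc jk unfolding A_def X_def by simp
  have fl: "(Suc j = 0 \<or> Suc k - Suc j \<notin> T1) = (k - j \<notin> T1)" by simp
  show ?case
  proof (cases "k - j \<in> T1")
    case True
    have "st k T1 T2 (Suc j) = (dig A A {}, dig X X {})" using True unfolding A_def X_def by (simp add: Let_def)
    thus ?thesis using step_T1[OF I] True fl by simp
  next
    case F1: False
    show ?thesis
    proof (cases "k - j \<in> T2")
      case True
      have q: "j = 0 \<or> Suc k - j \<notin> T1"
      proof (cases "j = 0")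
        case False
        have e: "Suc k - j = Suc (k - j)" using jk by simp
        have "Suc (k - j) \<notin> T1" using adj True by fastforce
        thus ?thesis using e by simp
      qed simp
      have I': "Inv A X True" using I q by simp
      have "st k T1 T2 (Suc j) = (dig A {} A, dig X {} X)" using True F1 unfolding A_def X_def by (simp add: Let_def)
      thus ?thesis using step_T2[OF I'] F1 fl by simp
    next
      case False
      have "st k T1 T2 (Suc j) = (dig A {} {}, dig X (shS (Max A)) {})" using False F1 unfolding A_def X_def by (simp add: Let_def)
      thus ?thesis using step_E[OF I] F1 fl by simp
    qed
  qed
qed

definition allw :: "nat set \<Rightarrow> nat set \<Rightarrow> nat \<Rightarrow> nat set" where
  "allw T1 T2 u = {0} \<union> (if u \<in> T1 then {1} else {}) \<union> (if u \<in> T2 then {2} else {})"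

lemma Dg_all0: "(\<forall>t. Dg x t = 0) \<Longrightarrow> x = 0"
  using Dg_eq[of x 0] by (simp add: Dg_def)

lemma st_A:
  assumes T1: "T1 \<subseteq> {0..k}" and T2: "T2 \<subseteq> {0..k}" and dis: "T1 \<inter> T2 = {}"
  shows "j \<le> Suc k \<Longrightarrow> fst (st k T1 T2 j) = {x. \<forall>t. Dg x t \<in> allw T1 T2 (t + (Suc k - j))}"
proof (induction j)
  case 0
  have "\<And>t. allw T1 T2 (t + Suc k) = {0}" using T1 T2 unfolding allw_def by auto
  hence "{x. \<forall>t. Dg x t \<in> allw T1 T2 (t + (Suc k - 0))} = {x. \<forall>t. Dg x t = 0}" by simp
  also have "\<dots> = {0}"
  proof (rule set_eqI, rule iffI)
    fix x assume "x \<in> {x. \<forall>t. Dg x t = 0}" thus "x \<in> {0}" using Dg_all0 by simp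
  qed (simp add: Dg_def)
  finally have "{x. \<forall>t. Dg x t \<in> allw T1 T2 (t + (Suc k - 0))} = {0}" .
  thus ?case by simp
next
  case (Suc j)
  hence jk: "j \<le> k" by simp
  define A where "A = fst (st k T1 T2 j)"
  have IH: "A = {x. \<forall>t. Dg x t \<in> allw T1 T2 (t + (Suc k - j))}" using Suc jk unfolding A_def by simp
  define p where "p = k - j"
  have sh: "\<And>t. Suc t + (Suc k - Suc j) = t + (Suc k - j)" using jk by simp
  have R: "{x. \<forall>t. Dg x t \<in> allw T1 T2 (t + (Suc k - Suc j))} = {x. x mod 3 \<in> allw T1 T2 p \<and> x div 3 \<in> A}"
  proof (rule set_eqI)
    fix x
    have "(\<forall>t. Dg x t \<in> allw T1 T2 (t + (Suc k - Suc j))) \<longleftrightarrow>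
          x mod 3 \<in> allw T1 T2 (0 + (Suc k - Suc j)) \<and> (\<forall>t. Dg (x div 3) t \<in> allw T1 T2 (Suc t + (Suc k - Suc j)))"
      by (rule all_Dg)
    thus "x \<in> {x. \<forall>t. Dg x t \<in> allw T1 T2 (t + (Suc k - Suc j))} \<longleftrightarrow> x \<in> {x. x mod 3 \<in> allw T1 T2 p \<and> x div 3 \<in> A}"
      unfolding IH sh p_def by simp
  qed
  have m3: "x mod 3 = 0 \<or> x mod 3 = 1 \<or> x mod 3 = 2" for x :: nat by linarith
  show ?case
  proof (cases "p \<in> T1")
    case True
    hence nT2: "p \<notin> T2" using dis by auto
    have "st k T1 T2 (Suc j) = (dig A A {}, snd (st k T1 T2 (Suc j)))" using True unfolding A_def p_def by (simp add: Let_def)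
    hence "fst (st k T1 T2 (Suc j)) = dig A A {}" by (metis fst_conv)
    also have "\<dots> = {x. x mod 3 \<in> allw T1 T2 p \<and> x div 3 \<in> A}"
      unfolding dig_def allw_def using True nT2 by auto
    finally show ?thesis using R by simp
  next
    case F1: False
    show ?thesis
    proof (cases "p \<in> T2")
      case True
      have "st k T1 T2 (Suc j) = (dig A {} A, snd (st k T1 T2 (Suc j)))" using True F1 unfolding A_def p_def by (simp add: Let_def)
      hence "fst (st k T1 T2 (Suc j)) = dig A {} A" by (metis fst_conv)
      also have "\<dots> = {x. x mod 3 \<in> allw T1 T2 p \<and> x div 3 \<in> A}"
        unfolding dig_def allw_def using True F1 by auto
      finally show ?thesis using R by simp
    next
      case False
      have "st k T1 T2 (Suc j) = (dig A {} {}, snd (st k T1 T2 (Suc j)))" using False F1 unfolding A_def p_def by (simp add: Let_def)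
      hence "fst (st k T1 T2 (Suc j)) = dig A {} {}" by (metis fst_conv)
      also have "\<dots> = {x. x mod 3 \<in> allw T1 T2 p \<and> x div 3 \<in> A}"
        unfolding dig_def allw_def using False F1 by auto
      finally show ?thesis using R by simp
    qed
  qed
qed

lemma A_eq:
  assumes T1: "T1 \<subseteq> {0..k}" and T2: "T2 \<subseteq> {0..k}" and dis: "T1 \<inter> T2 = {}"
  shows "{(\<Sum>a\<in>S1. 3^a) + 2 * (\<Sum>b\<in>S2. 3^b) | S1 S2. S1 \<subseteq> T1 \<and> S2 \<subseteq> T2} = {x. \<forall>t. Dg x t \<in> allw T1 T2 t}"
proof (rule set_eqI, rule iffI)
  fix x :: nat assume "x \<in> {(\<Sum>a\<in>S1. 3^a) + 2 * (\<Sum>b\<in>S2. 3^b) | S1 S2. S1 \<subseteq> T1 \<and> S2 \<subseteq> T2}"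
  then obtain S1 S2 where s: "S1 \<subseteq> T1" "S2 \<subseteq> T2" "x = V S1 S2" unfolding V_def by blast
  have "finite T1" "finite T2" using T1 T2 finite_subset by auto
  hence f: "finite S1" "finite S2" using s finite_subset by auto
  have d: "S1 \<inter> S2 = {}" using s dis by auto
  show "x \<in> {x. \<forall>t. Dg x t \<in> allw T1 T2 t}" using Dg_V[OF f d] s unfolding allw_def by auto
next
  fix x :: nat assume x: "x \<in> {x. \<forall>t. Dg x t \<in> allw T1 T2 t}"
  define S1 where "S1 = {t. t \<le> k \<and> Dg x t = 1}"
  define S2 where "S2 = {t. t \<le> k \<and> Dg x t = 2}"
  have f: "finite S1" "finite S2" unfolding S1_def S2_def by auto
  have d: "S1 \<inter> S2 = {}" unfolding S1_def S2_def by auto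
  have sub: "S1 \<subseteq> T1" "S2 \<subseteq> T2" using x unfolding S1_def S2_def allw_def by (auto split: if_splits)
  have "\<forall>t. Dg (V S1 S2) t = Dg x t"
  proof
    fix t
    have xt: "Dg x t \<in> allw T1 T2 t" using x by simp
    have dv: "Dg (V S1 S2) t = (if t \<in> S1 then 1 else if t \<in> S2 then 2 else 0)" by (rule Dg_V[OF f d])
    show "Dg (V S1 S2) t = Dg x t"
    proof (cases "Dg x t = 0")
      case True thus ?thesis using dv unfolding S1_def S2_def by simp
    next
      case False
      hence "t \<in> T1 \<or> t \<in> T2" using xt unfolding allw_def by (auto split: if_splits)
      hence "t \<le> k" using T1 T2 by auto
      thus ?thesis using dv xt False unfolding S1_def S2_def allw_def by (auto split: if_splits)
    qed
  qed
  hence "x = V S1 S2" using Dg_eq by metis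
  thus "x \<in> {(\<Sum>a\<in>S1. 3^a) + 2 * (\<Sum>b\<in>S2. 3^b) | S1 S2. S1 \<subseteq> T1 \<and> S2 \<subseteq> T2}"
    unfolding V_def using sub by blast
qed

theorem theorem3:
  fixes k :: nat and T1 T2 :: "nat set"
  assumes "k > 0"
    and "T1 \<subseteq> {0..k}" and "T2 \<subseteq> {0..k}"
    and "T1 \<inter> T2 = {}"
    and "\<forall>t\<in>T1. t \<ge> 1 \<longrightarrow> t - 1 \<notin> T2"
  shows "independent (stanley
           {(\<Sum>a\<in>S1. 3^a) + 2 * (\<Sum>b\<in>S2. 3^b) | S1 S2. S1 \<subseteq> T1 \<and> S2 \<subseteq> T2})"
proof -
  define A :: "nat set" where "A = {(\<Sum>a\<in>S1. 3^a) + 2 * (\<Sum>b\<in>S2. 3^b) | S1 S2. S1 \<subseteq> T1 \<and> S2 \<subseteq> T2}"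
  define X where "X = snd (st k T1 T2 (Suc k))"
  have "fst (st k T1 T2 (Suc k)) = {x. \<forall>t. Dg x t \<in> allw T1 T2 (t + (Suc k - Suc k))}"
    using st_A[OF assms(2,3,4), of "Suc k"] by (simp del: st.simps)
  hence Aeq: "fst (st k T1 T2 (Suc k)) = A" unfolding A_def using A_eq[OF assms(2,3,4)] by simp
  have I: "Inv A X (Suc k = 0 \<or> Suc k - Suc k \<notin> T1)"
    using Inv_st[OF assms(2,3,5), of "Suc k"] Aeq unfolding X_def by (simp del: st.simps)
  note B = Inv_basic[OF I]
  have cnt: "\<And>i. stanley A i \<in> X \<and> card (X \<inter> {..<stanley A i}) = i"
    using stanley_count[OF B(1) B(11) B(3) B(4) B(5) B(6)] by blast
  obtain n where pn: "per X n" "card (X \<inter> {..<3^n}) = 2^n" using B(9) by blast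
  have z: "0 \<in> X" using B(2,3) by auto
  show ?thesis using indep_from[OF cnt pn z] unfolding A_def .
qed

end
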